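(* Let $H\le G_{d,k}$. Then $\widetilde{\mathfrak X}_{d,k}(H)$ is a simplicial complex (every cell has multiplicity $1$) if and only if $H$ satisfies the intersection property: for every nonempty $J\subseteq[\![d]\!]$ and every $g\in G_{d,k}$, $$\bigcap_{i\in J}\mathcal A_{[K_{\widehat i}g]_H}=\mathcal A_{[K_{\widehat J}g]_H}.$$ If moreover $H$ is normal in $G_{d,k}$, then $\widetilde{\mathfrak X}_{d,k}(H)$ is a simplicial complex if and only if this equality holds for every nonempty $J$ with $g=e$.
   Context: Fix $d,k\ge1$, $[\![d]\!]=\{0,\dots,d\}$. $G_{d,k}=\langle\alpha_0,\dots,\alpha_d\mid\alpha_i^k=e\rangle$; for $J\subseteq[\![d]\!]$, $K_J=\langle\alpha_j:j\in J\rangle$, $\widehat J=[\![d]\!]\setminus J$, $\widehat i=\widehat{\{i\}}$. For $H\le G_{d,k}$, $[K_{\widehat J}g]_H=\{K_{\widehat J}gh:h\in H\}$ and $\mathcal A_{[K_{\widehat J}g]_H}=\{g'\in G_{d,k}:[K_{\widehat J}g']_H=[K_{\widehat J}g]_H\}$. The multicomplex $\widetilde{\mathfrak X}_{d,k}(H)$ has as multicells of dimension $|J|-1$ the classes $[K_{\widehat J}g]_H$, the multicell $[K_{\widehat J}g]_H$ lying over the cell $\Phi([K_{\widehat J}g]_H)=\{[K_{\widehat i}g]_H:i\in J\}$ (well defined); the multiplicity of a cell $\sigma$ is $|\Phi^{-1}(\sigma)|$. Thus $\widetilde{\mathfrak X}_{d,k}(H)$ is a simplicial complex iff $\Phi$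 is injective. *)

theory Defs
  imports "HOL-Algebra.Algebra"
begin

text \<open>The free product G_{d,k} of d+1 cyclic groups of order k, modelled by
  reduced words: lists of letters (i,m) meaning alpha_i^m, with i \<le> d,
  0 < m < k, and adjacent letters having distinct indices.\<close>

type_synonym word = "(nat \<times> nat) list"

fun push :: "nat \<Rightarrow> nat \<times> nat \<Rightarrow> word \<Rightarrow> word" where
  "push k (i, m) [] = [(i, m)]"
| "push k (i, m) ((j, n) # w) =
     (if i = j then (if (m + n) mod k = 0 then w else (i, (m + n) mod k) # w)
      else (i, m) # (j, n) # w)"

definition reduced :: "nat \<Rightarrow> nat \<Rightarrow> word \<Rightarrow> bool" where
  "reduced d k w \<longleftrightarrow> (\<forall>(i, m) \<in> set w. i \<le> d \<and> 0 < m \<and> m < k)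
      \<and> successively (\<lambda>a b. fst a \<noteq> fst b) w"

definition Gdk :: "nat \<Rightarrow> nat \<Rightarrow> word monoid" where
  "Gdk d k = \<lparr>carrier = {w. reduced d k w}, monoid.mult = (\<lambda>x y. foldr (push k) x y), one = []\<rparr>"

definition alpha :: "nat \<Rightarrow> nat \<Rightarrow> word" where
  "alpha k i = (if 1 < k then [(i, 1)] else [])"

definition Ksub :: "nat \<Rightarrow> nat \<Rightarrow> nat set \<Rightarrow> word set" where
  "Ksub d k J = generate (Gdk d k) (alpha k ` J)"

definition cls :: "nat \<Rightarrow> nat \<Rightarrow> word set \<Rightarrow> nat set \<Rightarrow> word \<Rightarrow> word set set" where
  "cls d k H J g = {Ksub d k ({0..d} - J) #>\<^bsub>Gdk d k\<^esub> (g \<otimes>\<^bsub>Gdk d k\<^esub> h) | h. h \<in> H}"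

definition Acls :: "nat \<Rightarrow> nat \<Rightarrow> word set \<Rightarrow> nat set \<Rightarrow> word \<Rightarrow> word set" where
  "Acls d k H J g = {g' \<in> carrier (Gdk d k). cls d k H J g' = cls d k H J g}"

definition multicells :: "nat \<Rightarrow> nat \<Rightarrow> word set \<Rightarrow> (nat set \<times> word set set) set" where
  "multicells d k H = {(J, cls d k H J g) | J g. J \<noteq> {} \<and> J \<subseteq> {0..d} \<and> g \<in> carrier (Gdk d k)}"

text \<open>The map Phi from multicells to cells; a cell is a set of vertices
  [K_{hat i} g]_H, each tagged by its type i.\<close>
definition Phi :: "nat \<Rightarrow> nat \<Rightarrow> word set \<Rightarrow> nat set \<times> word set set \<Rightarrow> (nat \<times> word set set) set" where
  "Phi d k H c = (let g = (SOME g. g \<in> carrier (Gdk d k) \<and> cls d k H (fst c) g = snd c)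
                  in {(i, cls d k H {i} g) | i. i \<in> fst c})"

definition is_simplicial :: "nat \<Rightarrow> nat \<Rightarrow> word set \<Rightarrow> bool" where
  "is_simplicial d k H \<longleftrightarrow> inj_on (Phi d k H) (multicells d k H)"

end

theory Submission
  imports Defs
begin


definition valid :: "nat \<Rightarrow> nat \<Rightarrow> nat \<times> nat \<Rightarrow> bool" where
  "valid d k a \<longleftrightarrow> fst a \<le> d \<and> 0 < snd a \<and> snd a < k"

lemma reduced_Nil[simp]: "reduced d k []"
  by (simp add: reduced_def)

lemma reduced_Cons: "reduced d k (a # w) \<longleftrightarrow> valid d k a \<and> reduced d k w \<and> (w = [] \<or> fst (hd w) \<noteq> fst a)"
  by (cases w) (auto simp: reduced_def valid_def split: prod.splits)

lemma push_reduced: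
  assumes "valid d k a" "reduced d k w" shows "reduced d k (push k a w)"
proof (cases w)
  case Nil thus ?thesis using assms by (cases a) (simp add: reduced_Cons)
next
  case (Cons b w')
  obtain i m where a: "a = (i,m)" by force
  obtain j n where b: "b = (j,n)" by force
  show ?thesis using assms unfolding Cons a b
    by (auto simp: reduced_Cons valid_def)
qed

lemma foldr_push_reduced:
  assumes "reduced d k x" "reduced d k y" shows "reduced d k (foldr (push k) x y)"
  using assms by (induction x) (auto simp: reduced_Cons intro: push_reduced)

lemma push_push:
  assumes "valid d k (i,m)" "valid d k (i,n)" "reduced d k w"
  shows "push k (i,m) (push k (i,n) w) =
     (if (m+n) mod k = 0 then w else push k (i,(m+n) mod k) w)"
proof (cases w)
  case Nil thus ?thesis by simp
next
  case (Cons b w')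
  obtain j p where b: "b = (j,p)" by force
  show ?thesis
  proof (cases "j = i")
    case False thus ?thesis using Cons b by simp
  next
    case True
    have p: "0 < p" "p < k" and hw': "w' = [] \<or> fst (hd w') \<noteq> i"
      using assms(3) Cons b True by (auto simp: reduced_Cons valid_def)
    have m: "0<m" "m<k" and n: "0<n" "n<k" using assms by (auto simp: valid_def)
    have push_ne: "push k (i,q) w' = (i,q) # w'" for q
      using hw' by (cases w') auto
    show ?thesis
    proof (cases "(n+p) mod k = 0")
      case np: True
      show ?thesis
      proof (cases "(m+n) mod k = 0")
        case mn: True
        have "(m + (n+p)) mod k = p mod k" using mn by (metis add.assoc mod_add_left_eq add_0)
        hence "m mod k = p mod k" using np by (metis mod_add_right_eq add_0_right)
        hence "m = p" using m p by simp
        thus ?thesis using Cons b True np mn push_ne by simp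
      next
        case mn: False
        have "((m+n) mod k + p) mod k = m mod k" using np
          by (metis add.assoc mod_add_left_eq mod_add_right_eq add_0_right)
        thus ?thesis using Cons b True np mn push_ne m by simp
      qed
    next
      case np: False
      have e1: "(m + (n+p) mod k) mod k = ((m+n) mod k + p) mod k"
        by (metis add.assoc mod_add_left_eq mod_add_right_eq)
      show ?thesis
      proof (cases "(m+n) mod k = 0")
        case mn: True
        have "(m + (n+p) mod k) mod k = p" using e1 mn p by simp
        thus ?thesis using Cons b True np mn p by simp
      next
        case mn: False
        thus ?thesis using Cons b True np e1 by simp
      qed
    qed
  qed
qed

lemma foldr_push_push:
  assumes "valid d k a" "reduced d k w" "reduced d k z"
  shows "foldr (push k) (push k a w) z = push k a (foldr (push k) w z)"
proof (cases w)
  case Nil thus ?thesis by (cases a) simp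
next
  case (Cons b w')
  obtain i m where a: "a = (i,m)" by force
  obtain j n where b: "b = (j,n)" by force
  have w': "reduced d k w'" "valid d k b" using assms Cons by (auto simp: reduced_Cons)
  have r: "reduced d k (foldr (push k) w' z)" using w' assms foldr_push_reduced by blast
  show ?thesis
  proof (cases "i = j")
    case False thus ?thesis using Cons a b by simp
  next
    case True
    have "push k (i,m) (push k (i,n) (foldr (push k) w' z)) =
      (if (m+n) mod k = 0 then foldr (push k) w' z else push k (i,(m+n) mod k) (foldr (push k) w' z))"
      using push_push[OF _ _ r, of i m n] assms w' a b True by simp
    thus ?thesis using Cons a b True by simp
  qed
qed

lemma gassoc:
  assumes "reduced d k x" "reduced d k y" "reduced d k z"
  shows "foldr (push k) (foldr (push k) x y) z = foldr (push k) x (foldr (push k) y z)"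
  using assms
proof (induction x)
  case Nil thus ?case by simp
next
  case (Cons a x)
  have a: "valid d k a" "reduced d k x" using Cons.prems by (auto simp: reduced_Cons)
  have "foldr (push k) (foldr (push k) (a#x) y) z = foldr (push k) (push k a (foldr (push k) x y)) z" by simp
  also have "\<dots> = push k a (foldr (push k) (foldr (push k) x y) z)"
    using foldr_push_push a Cons.prems foldr_push_reduced by blast
  also have "\<dots> = push k a (foldr (push k) x (foldr (push k) y z))" using Cons a by simp
  finally show ?case by simp
qed

lemma push_Cons_reduced:
  assumes "reduced d k (a # w)" shows "push k a w = a # w"
  using assms by (cases w; cases a) (auto simp: reduced_Cons)

lemma r_one: "reduced d k x \<Longrightarrow> foldr (push k) x [] = x"
proof (induction x)
  case Nil thus ?case by simp
next
  case (Cons a x)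
  hence "reduced d k x" by (simp add: reduced_Cons)
  thus ?case using Cons push_Cons_reduced by simp
qed

definition winv :: "nat \<Rightarrow> word \<Rightarrow> word" where
  "winv k x = rev (map (\<lambda>(i,m). (i, k - m)) x)"

lemma winv_reduced: "reduced d k x \<Longrightarrow> reduced d k (winv k x)"
  unfolding winv_def reduced_def
  by (auto simp: successively_rev successively_map split: prod.splits
      elim!: successively_mono)

lemma winv_inv: "reduced d k x \<Longrightarrow> foldr (push k) (winv k x) x = []"
proof (induction x)
  case Nil thus ?case by (simp add: winv_def)
next
  case (Cons a x)
  obtain i m where a: "a = (i,m)" by force
  have x: "reduced d k x" and m: "0<m" "m<k" using Cons.prems a by (auto simp: reduced_Cons valid_def)
  have "winv k (a#x) = winv k x @ [(i,k-m)]" by (simp add: winv_def a)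
  hence "foldr (push k) (winv k (a#x)) (a#x) = foldr (push k) (winv k x) (push k (i,k-m) ((i,m)#x))"
    by (simp add: a)
  also have "push k (i,k-m) ((i,m)#x) = x" using m by simp
  finally show ?case using Cons.IH x by simp
qed

lemma group_Gdk: "group (Gdk d k)"
proof (rule groupI)
  fix x assume "x \<in> carrier (Gdk d k)"
  thus "\<exists>y\<in>carrier (Gdk d k). y \<otimes>\<^bsub>Gdk d k\<^esub> x = \<one>\<^bsub>Gdk d k\<^esub>"
    by (intro bexI[of _ "winv k x"]) (auto simp: Gdk_def winv_reduced winv_inv)
qed (auto simp: Gdk_def foldr_push_reduced gassoc)

lemma one_Gdk: "\<one>\<^bsub>Gdk d k\<^esub> = []" by (simp add: Gdk_def)



lemma (in group) inv_cancel_aux[simp]: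
  "x \<in> carrier G \<Longrightarrow> y \<in> carrier G \<Longrightarrow> x \<otimes> (inv x \<otimes> y) = y"
  "x \<in> carrier G \<Longrightarrow> y \<in> carrier G \<Longrightarrow> inv x \<otimes> (x \<otimes> y) = y"
  by (simp_all add: m_assoc[symmetric])

definition (in group) RR :: "'a set \<Rightarrow> 'a set \<Rightarrow> 'a \<Rightarrow> 'a \<Rightarrow> bool" where
  "RR K H g' g \<longleftrightarrow> (\<exists>x\<in>K. \<exists>h\<in>H. g' = x \<otimes> g \<otimes> h)"

lemma (in group) cls_sub:
  assumes K: "subgroup K G" and H: "subgroup H G" and g: "g \<in> carrier G"
    and x: "x \<in> K" and h: "h \<in> H"
  shows "{K #> ((x \<otimes> g \<otimes> h) \<otimes> h') | h'. h' \<in> H} \<subseteq> {K #> (g \<otimes> h') | h'. h' \<in> H}"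
proof
  fix C assume "C \<in> {K #> ((x \<otimes> g \<otimes> h) \<otimes> h') | h'. h' \<in> H}"
  then obtain h' where h': "h' \<in> H" "C = K #> ((x \<otimes> g \<otimes> h) \<otimes> h')" by blast
  have xc: "x \<in> carrier G" using subgroup.mem_carrier[OF K x] .
  have hc: "h \<in> carrier G" "h' \<in> carrier G" using subgroup.mem_carrier[OF H h] subgroup.mem_carrier[OF H h'(1)] by auto
  have "(x \<otimes> g \<otimes> h) \<otimes> h' = x \<otimes> (g \<otimes> (h \<otimes> h'))" using xc hc g by (simp add: m_assoc)
  hence "C = (K #> x) #> (g \<otimes> (h \<otimes> h'))" using h' xc hc g K
    by (simp add: coset_mult_assoc subgroup.subset)
  also have "K #> x = K" using coset_join2[OF xc K x] .
  finally have "C = K #> (g \<otimes> (h \<otimes> h'))" .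
  moreover have "h \<otimes> h' \<in> H" using subgroup.m_closed[OF H h h'(1)] .
  ultimately show "C \<in> {K #> (g \<otimes> h') | h'. h' \<in> H}" by blast
qed

lemma (in group) cls_eq_iff:
  assumes K: "subgroup K G" and H: "subgroup H G" and g: "g \<in> carrier G" and g': "g' \<in> carrier G"
  shows "{K #> (g' \<otimes> h) | h. h \<in> H} = {K #> (g \<otimes> h) | h. h \<in> H} \<longleftrightarrow> RR K H g' g"
proof
  assume eq: "{K #> (g' \<otimes> h) | h. h \<in> H} = {K #> (g \<otimes> h) | h. h \<in> H}"
  have "K #> (g' \<otimes> \<one>) \<in> {K #> (g' \<otimes> h) | h. h \<in> H}" using subgroup.one_closed[OF H] by blast
  then obtain h where h: "h \<in> H" "K #> g' = K #> (g \<otimes> h)" using eq g' by auto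
  have hc: "h \<in> carrier G" using subgroup.mem_carrier[OF H h(1)] .
  have "g' \<in> K #> (g \<otimes> h)" using h rcos_self[OF g' K] by simp
  then obtain x where "x \<in> K" "g' = x \<otimes> (g \<otimes> h)" unfolding r_coset_def by blast
  moreover have "x \<in> carrier G" using subgroup.mem_carrier[OF K \<open>x \<in> K\<close>] .
  ultimately show "RR K H g' g" using h hc g unfolding RR_def by (metis m_assoc)
next
  assume "RR K H g' g"
  then obtain x h where x: "x \<in> K" and h: "h \<in> H" and e: "g' = x \<otimes> g \<otimes> h" unfolding RR_def by blast
  have xc: "x \<in> carrier G" using subgroup.mem_carrier[OF K x] .
  have hc: "h \<in> carrier G" using subgroup.mem_carrier[OF H h(1)] .
  have ge: "g = inv x \<otimes> g' \<otimes> inv h" using e xc hc g by (simp add: m_assoc)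
  have ix: "inv x \<in> K" using subgroup.m_inv_closed[OF K x] .
  have ih: "inv h \<in> H" using subgroup.m_inv_closed[OF H h] .
  have 2: "{K #> (g \<otimes> h') | h'. h' \<in> H} \<subseteq> {K #> (g' \<otimes> h') | h'. h' \<in> H}"
    using cls_sub[OF K H g' ix ih] by (simp only: ge[symmetric])
  have 1: "{K #> (g' \<otimes> h') | h'. h' \<in> H} \<subseteq> {K #> (g \<otimes> h') | h'. h' \<in> H}"
    using cls_sub[OF K H g x h] e by simp
  show "{K #> (g' \<otimes> h) | h. h \<in> H} = {K #> (g \<otimes> h) | h. h \<in> H}" using 1 2 by blast
qed

lemma (in group) RR_mono: "RR K H g' g \<Longrightarrow> K \<subseteq> K' \<Longrightarrow> RR K' H g' g"
  unfolding RR_def by blast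

lemma (in group) RR_normal:
  assumes N: "H \<lhd> G" and y: "y \<in> carrier G" and g: "g \<in> carrier G" and K: "subgroup K G"
  shows "RR K H (y \<otimes> g) g \<longleftrightarrow> RR K H y \<one>"
proof
  assume "RR K H (y \<otimes> g) g"
  then obtain x h where x: "x \<in> K" and h: "h \<in> H" and e: "y \<otimes> g = x \<otimes> g \<otimes> h" unfolding RR_def by blast
  have xc: "x \<in> carrier G" using subgroup.mem_carrier[OF K x] .
  have hc: "h \<in> carrier G" using subgroup.mem_carrier[OF normal_imp_subgroup[OF N] h] .
  have "y = y \<otimes> g \<otimes> inv g" using y g by (simp add: m_assoc)
  also have "\<dots> = x \<otimes> \<one> \<otimes> (g \<otimes> h \<otimes> inv g)" using e xc hc g by (simp add: m_assoc)
  finally show "RR K H y \<one>" unfolding RR_def using x normal.inv_op_closed2[OF N g h] by blast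
next
  assume "RR K H y \<one>"
  then obtain x h where x: "x \<in> K" and h: "h \<in> H" and e: "y = x \<otimes> \<one> \<otimes> h" unfolding RR_def by blast
  have xc: "x \<in> carrier G" using subgroup.mem_carrier[OF K x] .
  have hc: "h \<in> carrier G" using subgroup.mem_carrier[OF normal_imp_subgroup[OF N] h] .
  have "y \<otimes> g = x \<otimes> g \<otimes> (inv g \<otimes> h \<otimes> g)" using e xc hc g by (simp add: m_assoc)
  thus "RR K H (y \<otimes> g) g" unfolding RR_def using x normal.inv_op_closed1[OF N g h] by blast
qed



abbreviation "KK d k J \<equiv> Ksub d k ({0..d} - J)"

lemma alpha_carrier: "i \<le> d \<Longrightarrow> alpha k i \<in> carrier (Gdk d k)"
  by (auto simp: alpha_def Gdk_def reduced_def)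

lemma Ksub_subgroup: "S \<subseteq> {0..d} \<Longrightarrow> subgroup (Ksub d k S) (Gdk d k)"
  unfolding Ksub_def
proof (rule group.generate_is_subgroup[OF group_Gdk])
  assume "S \<subseteq> {0..d}"
  show "alpha k ` S \<subseteq> carrier (Gdk d k)"
  proof
    fix x assume "x \<in> alpha k ` S"
    then obtain i where "i \<in> S" "x = alpha k i" by blast
    moreover have "i \<le> d" using \<open>i \<in> S\<close> \<open>S \<subseteq> {0..d}\<close> by auto
    ultimately show "x \<in> carrier (Gdk d k)" using alpha_carrier by simp
  qed
qed

lemma KK_subgroup: "subgroup (KK d k J) (Gdk d k)"
  by (rule Ksub_subgroup) auto

lemma KK_mono: "i \<in> J \<Longrightarrow> KK d k J \<subseteq> KK d k {i}"
  unfolding Ksub_def by (rule group.mono_generate[OF group_Gdk]) auto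

lemma cls_eq:
  assumes H: "subgroup H (Gdk d k)" and g: "g \<in> carrier (Gdk d k)" and g': "g' \<in> carrier (Gdk d k)"
  shows "cls d k H J g' = cls d k H J g \<longleftrightarrow> group.RR (Gdk d k) (KK d k J) H g' g"
  unfolding cls_def using group.cls_eq_iff[OF group_Gdk KK_subgroup H g g'] .

lemma Acls_eq:
  assumes H: "subgroup H (Gdk d k)" and g: "g \<in> carrier (Gdk d k)"
  shows "Acls d k H J g = {g' \<in> carrier (Gdk d k). group.RR (Gdk d k) (KK d k J) H g' g}"
  unfolding Acls_def using cls_eq[OF H g] by blast

lemma Phi_eq:
  assumes H: "subgroup H (Gdk d k)" and g: "g \<in> carrier (Gdk d k)"
  shows "Phi d k H (J, cls d k H J g) = {(i, cls d k H {i} g) | i. i \<in> J}"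
proof -
  define g0 where "g0 = (SOME g0. g0 \<in> carrier (Gdk d k) \<and> cls d k H J g0 = cls d k H J g)"
  have "g0 \<in> carrier (Gdk d k) \<and> cls d k H J g0 = cls d k H J g"
    unfolding g0_def by (rule someI[of _ g]) (simp add: g)
  hence g0: "g0 \<in> carrier (Gdk d k)" and R: "group.RR (Gdk d k) (KK d k J) H g0 g"
    using cls_eq[OF H g] by auto
  have "cls d k H {i} g0 = cls d k H {i} g" if "i \<in> J" for i
    using cls_eq[OF H g g0] group.RR_mono[OF group_Gdk R KK_mono[OF that]] by simp
  moreover have "Phi d k H (J, cls d k H J g) = {(i, cls d k H {i} g0) | i. i \<in> J}"
    unfolding Phi_def g0_def by simp
  ultimately show ?thesis by auto
qed

lemma simplicial_iff:
  assumes H: "subgroup H (Gdk d k)"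
  shows "is_simplicial d k H \<longleftrightarrow>
    (\<forall>J g g'. J \<noteq> {} \<and> J \<subseteq> {0..d} \<and> g \<in> carrier (Gdk d k) \<and> g' \<in> carrier (Gdk d k) \<and>
       (\<forall>i\<in>J. group.RR (Gdk d k) (KK d k {i}) H g' g) \<longrightarrow> group.RR (Gdk d k) (KK d k J) H g' g)"
  (is "_ \<longleftrightarrow> ?C")
proof
  assume inj: "is_simplicial d k H"
  show ?C
  proof (intro allI impI)
    fix J g g' assume a: "J \<noteq> {} \<and> J \<subseteq> {0..d} \<and> g \<in> carrier (Gdk d k) \<and> g' \<in> carrier (Gdk d k) \<and>
       (\<forall>i\<in>J. group.RR (Gdk d k) (KK d k {i}) H g' g)"
    hence g: "g \<in> carrier (Gdk d k)" and g': "g' \<in> carrier (Gdk d k)" by auto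
    have m1: "(J, cls d k H J g) \<in> multicells d k H" using a unfolding multicells_def by blast
    have m2: "(J, cls d k H J g') \<in> multicells d k H" using a unfolding multicells_def by blast
    have "\<forall>i\<in>J. cls d k H {i} g' = cls d k H {i} g" using a cls_eq[OF H g g'] by blast
    hence "Phi d k H (J, cls d k H J g') = Phi d k H (J, cls d k H J g)"
      unfolding Phi_eq[OF H g] Phi_eq[OF H g'] by blast
    hence "cls d k H J g' = cls d k H J g" using inj m1 m2 unfolding is_simplicial_def inj_on_def by blast
    thus "group.RR (Gdk d k) (KK d k J) H g' g" using cls_eq[OF H g g'] by blast
  qed
next
  assume C: ?C
  show "is_simplicial d k H" unfolding is_simplicial_def inj_on_def
  proof (intro ballI impI)
    fix c c' assume c: "c \<in> multicells d k H" and c': "c' \<in> multicells d k H"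
      and eq: "Phi d k H c = Phi d k H c'"
    from c obtain J g where J: "J \<noteq> {}" "J \<subseteq> {0..d}" and g: "g \<in> carrier (Gdk d k)"
      and ce: "c = (J, cls d k H J g)" unfolding multicells_def by blast
    from c' obtain J' g' where g': "g' \<in> carrier (Gdk d k)"
      and ce': "c' = (J', cls d k H J' g')" unfolding multicells_def by blast
    have eq2: "{(i, cls d k H {i} g) | i. i \<in> J} = {(i, cls d k H {i} g') | i. i \<in> J'}"
      using eq unfolding ce ce' Phi_eq[OF H g] Phi_eq[OF H g'] .
    have "fst ` {(i, cls d k H {i} g) | i. i \<in> J} = J" by force
    moreover have "fst ` {(i, cls d k H {i} g') | i. i \<in> J'} = J'" by force
    ultimately have JJ: "J' = J" using eq2 by simp
    have "\<forall>i\<in>J. cls d k H {i} g' = cls d k H {i} g"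
    proof
      fix i assume "i \<in> J"
      hence "(i, cls d k H {i} g) \<in> {(i, cls d k H {i} g') | i. i \<in> J'}" using eq2 by blast
      thus "cls d k H {i} g' = cls d k H {i} g" by auto
    qed
    hence "\<forall>i\<in>J. group.RR (Gdk d k) (KK d k {i}) H g' g" using cls_eq[OF H g g'] by blast
    hence "group.RR (Gdk d k) (KK d k J) H g' g" using C J g g' by blast
    hence "cls d k H J g' = cls d k H J g" using cls_eq[OF H g g'] by blast
    thus "c = c'" using ce ce' JJ by simp
  qed
qed

lemma Acls_inter_sub:
  assumes H: "subgroup H (Gdk d k)" and g: "g \<in> carrier (Gdk d k)"
  shows "Acls d k H J g \<subseteq> (\<Inter>i\<in>J. Acls d k H {i} g)"
  using group.RR_mono[OF group_Gdk _ KK_mono] unfolding Acls_eq[OF H g] by blast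

lemma cond_iff:
  assumes H: "subgroup H (Gdk d k)" and J: "J \<noteq> {}" and g: "g \<in> carrier (Gdk d k)"
  shows "(\<Inter>i\<in>J. Acls d k H {i} g) = Acls d k H J g \<longleftrightarrow>
    (\<forall>g'\<in>carrier (Gdk d k). (\<forall>i\<in>J. group.RR (Gdk d k) (KK d k {i}) H g' g) \<longrightarrow> group.RR (Gdk d k) (KK d k J) H g' g)"
  using Acls_inter_sub[OF H g, of J] J unfolding Acls_eq[OF H g] by blast




theorem proposition9:
  fixes d k :: nat and H :: "word set"
  assumes "1 \<le> d" and "1 \<le> k" and "subgroup H (Gdk d k)"
  shows "(is_simplicial d k H \<longleftrightarrow>
           (\<forall>J g. J \<noteq> {} \<and> J \<subseteq> {0..d} \<and> g \<in> carrier (Gdk d k) \<longrightarrow>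
              (\<Inter>i\<in>J. Acls d k H {i} g) = Acls d k H J g))
         \<and> (H \<lhd> Gdk d k \<longrightarrow>
         (is_simplicial d k H \<longleftrightarrow>
           (\<forall>J. J \<noteq> {} \<and> J \<subseteq> {0..d} \<longrightarrow>
              (\<Inter>i\<in>J. Acls d k H {i} \<one>\<^bsub>Gdk d k\<^esub>) = Acls d k H J \<one>\<^bsub>Gdk d k\<^esub>)))"
proof -
  note H = assms(3)
  interpret G: group "Gdk d k" by (rule group_Gdk)
  have P1: "is_simplicial d k H \<longleftrightarrow>
           (\<forall>J g. J \<noteq> {} \<and> J \<subseteq> {0..d} \<and> g \<in> carrier (Gdk d k) \<longrightarrow>
              (\<Inter>i\<in>J. Acls d k H {i} g) = Acls d k H J g)"
  proof -
    have "(\<forall>J g. J \<noteq> {} \<and> J \<subseteq> {0..d} \<and> g \<in> carrier (Gdk d k) \<longrightarrow>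
              (\<Inter>i\<in>J. Acls d k H {i} g) = Acls d k H J g) \<longleftrightarrow>
          (\<forall>J g g'. J \<noteq> {} \<and> J \<subseteq> {0..d} \<and> g \<in> carrier (Gdk d k) \<and> g' \<in> carrier (Gdk d k) \<and>
       (\<forall>i\<in>J. G.RR (KK d k {i}) H g' g) \<longrightarrow> G.RR (KK d k J) H g' g)"
    proof (intro iffI allI impI)
      fix J g g'
      assume A: "\<forall>J g. J \<noteq> {} \<and> J \<subseteq> {0..d} \<and> g \<in> carrier (Gdk d k) \<longrightarrow>
              (\<Inter>i\<in>J. Acls d k H {i} g) = Acls d k H J g"
        and B: "J \<noteq> {} \<and> J \<subseteq> {0..d} \<and> g \<in> carrier (Gdk d k) \<and> g' \<in> carrier (Gdk d k) \<and>
       (\<forall>i\<in>J. G.RR (KK d k {i}) H g' g)"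
      have "(\<Inter>i\<in>J. Acls d k H {i} g) = Acls d k H J g" using A B by simp
      hence "\<forall>g'\<in>carrier (Gdk d k). (\<forall>i\<in>J. G.RR (KK d k {i}) H g' g) \<longrightarrow> G.RR (KK d k J) H g' g"
        using cond_iff[OF H, of J g] B by simp
      thus "G.RR (KK d k J) H g' g" using B by simp
    next
      fix J g
      assume A: "\<forall>J g g'. J \<noteq> {} \<and> J \<subseteq> {0..d} \<and> g \<in> carrier (Gdk d k) \<and> g' \<in> carrier (Gdk d k) \<and>
       (\<forall>i\<in>J. G.RR (KK d k {i}) H g' g) \<longrightarrow> G.RR (KK d k J) H g' g"
        and B: "J \<noteq> {} \<and> J \<subseteq> {0..d} \<and> g \<in> carrier (Gdk d k)"
      have "\<forall>g'\<in>carrier (Gdk d k). (\<forall>i\<in>J. G.RR (KK d k {i}) H g' g) \<longrightarrow> G.RR (KK d k J) H g' g"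
      proof (intro ballI impI)
        fix g' assume "g' \<in> carrier (Gdk d k)" "\<forall>i\<in>J. G.RR (KK d k {i}) H g' g"
        thus "G.RR (KK d k J) H g' g" using A[rule_format, of J g g'] B by blast
      qed
      thus "(\<Inter>i\<in>J. Acls d k H {i} g) = Acls d k H J g" using cond_iff[OF H, of J g] B by simp
    qed
    thus ?thesis using simplicial_iff[OF H] by simp
  qed
  have P2: "is_simplicial d k H \<longleftrightarrow>
           (\<forall>J. J \<noteq> {} \<and> J \<subseteq> {0..d} \<longrightarrow>
              (\<Inter>i\<in>J. Acls d k H {i} \<one>\<^bsub>Gdk d k\<^esub>) = Acls d k H J \<one>\<^bsub>Gdk d k\<^esub>)"
    if N: "H \<lhd> Gdk d k"
  proof
    assume "is_simplicial d k H"
    thus "\<forall>J. J \<noteq> {} \<and> J \<subseteq> {0..d} \<longrightarrow>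
              (\<Inter>i\<in>J. Acls d k H {i} \<one>\<^bsub>Gdk d k\<^esub>) = Acls d k H J \<one>\<^bsub>Gdk d k\<^esub>"
      using P1 by simp
  next
    assume C1: "\<forall>J. J \<noteq> {} \<and> J \<subseteq> {0..d} \<longrightarrow>
              (\<Inter>i\<in>J. Acls d k H {i} \<one>\<^bsub>Gdk d k\<^esub>) = Acls d k H J \<one>\<^bsub>Gdk d k\<^esub>"
    have "(\<Inter>i\<in>J. Acls d k H {i} g) = Acls d k H J g"
      if J: "J \<noteq> {}" "J \<subseteq> {0..d}" and g: "g \<in> carrier (Gdk d k)" for J g
    proof -
      have c1: "\<forall>y\<in>carrier (Gdk d k). (\<forall>i\<in>J. G.RR (KK d k {i}) H y \<one>\<^bsub>Gdk d k\<^esub>)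
                 \<longrightarrow> G.RR (KK d k J) H y \<one>\<^bsub>Gdk d k\<^esub>"
        using C1 J cond_iff[OF H J(1) G.one_closed] by blast
      show ?thesis unfolding cond_iff[OF H J(1) g]
      proof (intro ballI impI)
        fix g' assume g': "g' \<in> carrier (Gdk d k)" and R: "\<forall>i\<in>J. G.RR (KK d k {i}) H g' g"
        define y where "y = g' \<otimes>\<^bsub>Gdk d k\<^esub> inv\<^bsub>Gdk d k\<^esub> g"
        have y: "y \<in> carrier (Gdk d k)" unfolding y_def using g g' by simp
        have gy: "g' = y \<otimes>\<^bsub>Gdk d k\<^esub> g" unfolding y_def using g g' by (simp add: G.m_assoc)
        have "\<forall>i\<in>J. G.RR (KK d k {i}) H y \<one>\<^bsub>Gdk d k\<^esub>"
          using R G.RR_normal[OF N y g KK_subgroup] gy by simp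
        hence "G.RR (KK d k J) H y \<one>\<^bsub>Gdk d k\<^esub>" using c1 y by blast
        thus "G.RR (KK d k J) H g' g" using G.RR_normal[OF N y g KK_subgroup] gy by simp
      qed
    qed
    thus "is_simplicial d k H" using P1 by blast
  qed
  show ?thesis using P1 P2 by blast
qed

end
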